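(* Let $M$ be a path-connected pre-$\Delta$-monoid with identity $e$, and let $\alpha_n,\beta_n\in\Omega(M,e)$ be null-sequences. Then $\prod_{n=1}^{\infty}(\alpha_n\cdot\beta_n)\simeq\left(\prod_{n=1}^{\infty}\alpha_n\right)\cdot\left(\prod_{n=1}^{\infty}\beta_n\right)$ by a path-homotopy whose image lies in $\mathrm{Im}\left(\prod_{n=1}^\infty\alpha_n\right)\ast\mathrm{Im}\left(\prod_{n=1}^\infty\beta_n\right)$.
   Context: A pre-$\Delta$-monoid is a space $M$ with an associative operation $\ast$ with identity $e$ such that for any continuous paths $\alpha,\beta:[0,1]\to M$, the pointwise product $t\mapsto\alpha(t)\ast\beta(t)$ is continuous. For $A,B\subseteq M$, $A\ast B=\{a\ast b\mid a\in A,b\in B\}$. $\alpha\cdot\beta$ denotes path concatenation. A sequence of loops $\alpha_n\in\Omega(M,e)$ is a null-sequence if every neighborhood of $e$ contains $\mathrm{Im}(\alpha_n)$ for all but finitely many $n$; its infinite concatenation $\prod_{n=1}^\infty\alpha_n$ is the loop equal to (a linear reparametrization of) $\alpha_n$ on $[\frac{n-1}{n},\frac{n}{n+1}]$ and sending $1$ to $e$. *)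

theory Defs
  imports "HOL-Analysis.Analysis"
begin

definition pre_delta_monoid :: "('a::topological_space \<Rightarrow> 'a \<Rightarrow> 'a) \<Rightarrow> 'a \<Rightarrow> bool" where
  "pre_delta_monoid opr e \<longleftrightarrow>
     (\<forall>x y z. opr (opr x y) z = opr x (opr y z)) \<and>
     (\<forall>x. opr e x = x \<and> opr x e = x) \<and>
     (\<forall>\<alpha> \<beta>. path \<alpha> \<and> path \<beta> \<longrightarrow> path (\<lambda>t. opr (\<alpha> t) (\<beta> t)))"

definition set_mult :: "('a \<Rightarrow> 'a \<Rightarrow> 'a) \<Rightarrow> 'a set \<Rightarrow> 'a set \<Rightarrow> 'a set" where
  "set_mult opr A B = {opr a b | a b. a \<in> A \<and> b \<in> B}"

definition loop_at :: "'a::topological_space \<Rightarrow> (real \<Rightarrow> 'a) \<Rightarrow> bool" where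
  "loop_at e \<gamma> \<longleftrightarrow> path \<gamma> \<and> pathstart \<gamma> = e \<and> pathfinish \<gamma> = e"

definition null_sequence :: "'a::topological_space \<Rightarrow> (nat \<Rightarrow> real \<Rightarrow> 'a) \<Rightarrow> bool" where
  "null_sequence e \<alpha> \<longleftrightarrow>
     (\<forall>n\<ge>1. loop_at e (\<alpha> n)) \<and>
     (\<forall>U. open U \<and> e \<in> U \<longrightarrow> (\<forall>\<^sub>F n in sequentially. path_image (\<alpha> n) \<subseteq> U))"

text \<open>Infinite concatenation prod_{n>=1} alpha_n: on [(n-1)/n, n/(n+1)] it is the linear
reparametrisation of alpha_n; 1 is sent to e.  For t in [(n-1)/n, n/(n+1)) we have
n = floor (1/(1-t)); the interval has length 1/(n(n+1)).\<close>
definition inf_concat :: "'a \<Rightarrow> (nat \<Rightarrow> real \<Rightarrow> 'a) \<Rightarrow> real \<Rightarrow> 'a" where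
  "inf_concat e \<alpha> t =
     (if t = 1 then e
      else (let n = nat \<lfloor>1 / (1 - t)\<rfloor>
            in \<alpha> n ((t - (real n - 1) / real n) * (real n * (real n + 1)))))"

end

theory Submission
  imports Defs
begin

definition blk :: "nat \<Rightarrow> real" where "blk n = (real n - 1) / real n"

lemma blk_Suc: "blk (Suc n) = real n / (real n + 1)"
  by (simp add: blk_def)

lemma blk_1[simp]: "blk 1 = 0" "blk (Suc 0) = 0" by (simp_all add: blk_def)

lemma blk_lt1: "blk n < 1"
  by (cases "n = 0") (auto simp: blk_def divide_simps)

lemma blk_ge0: "n \<ge> 1 \<Longrightarrow> blk n \<ge> 0"
  by (simp add: blk_def)

lemma blk_mono_Suc: "n \<ge> 1 \<Longrightarrow> blk n < blk (Suc n)"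
  by (simp add: blk_def divide_simps) (simp add: algebra_simps)

lemma blk_mono: assumes "1 \<le> m" "m \<le> n" shows "blk m \<le> blk n"
  using assms(2)
proof (induction n rule: dec_induct)
  case base then show ?case by simp
next
  case (step n) then show ?case using blk_mono_Suc[of n] assms(1) by linarith
qed

lemma blk_diff: "n \<ge> 1 \<Longrightarrow> (blk (Suc n) - blk n) * (real n * (real n + 1)) = 1"
  by (simp add: blk_def divide_simps) (simp add: algebra_simps)

lemma floor_blk:
  assumes "n \<ge> 1" "blk n \<le> x" "x < blk (Suc n)"
  shows "nat \<lfloor>1 / (1 - x)\<rfloor> = n"
proof -
  have x1: "x < 1" using assms(3) blk_lt1 by (meson less_trans)
  have n0: "real n > 0" using assms(1) by simp
  have "real n - 1 \<le> x * real n" using assms(2) n0 by (simp add: blk_def divide_simps)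
  then have A: "real n \<le> 1 / (1 - x)" using x1 by (simp add: divide_simps) (simp add: algebra_simps)
  have "x * (real n + 1) < real n" using assms(3) by (simp add: blk_Suc divide_simps)
  then have B: "1 / (1 - x) < real n + 1" using x1 by (simp add: divide_simps) (simp add: algebra_simps)
  have "\<lfloor>1 / (1 - x)\<rfloor> = int n" using A B by (intro floor_unique) auto
  then show ?thesis by simp
qed

lemma inf_concat_val:
  assumes "n \<ge> 1" "blk n \<le> x" "x < blk (Suc n)"
  shows "inf_concat c \<gamma> x = \<gamma> n ((x - blk n) * (real n * (real n + 1)))"
proof -
  have "x \<noteq> 1" using assms(3) blk_lt1 by (metis order.strict_iff_not)
  then show ?thesis using floor_blk[OF assms] by (simp add: inf_concat_def blk_def Let_def)
qed

lemma blk_cover: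
  assumes "0 \<le> t" "t < 1"
  shows "\<exists>n\<ge>1. blk n \<le> t \<and> t < blk (Suc n)"
proof -
  define n where "n = nat \<lfloor>1 / (1 - t)\<rfloor>"
  have ge: "1 / (1 - t) \<ge> 1" using assms by (simp add: divide_simps)
  then have n1: "n \<ge> 1" unfolding n_def by linarith
  have "real n \<le> 1 / (1 - t)" "1 / (1 - t) < real n + 1" unfolding n_def using ge by linarith+
  then have "real n * (1 - t) \<le> 1" "1 < (real n + 1) * (1 - t)" using assms by (simp_all add: divide_simps)
  then have "blk n \<le> t" "t < blk (Suc n)" using n1
    by (simp_all add: blk_def blk_Suc divide_simps) (simp_all add: algebra_simps)
  then show ?thesis using n1 by blast
qed

lemma blk_tendsto: "blk \<longlonglongrightarrow> 1"
proof -
  have "(\<lambda>n. 1 - 1 / real n) \<longlonglongrightarrow> 1 - 0"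
    by (intro tendsto_intros lim_1_over_n)
  moreover have "\<forall>\<^sub>F n in sequentially. 1 - 1 / real n = blk n"
    using eventually_ge_at_top[of 1] by eventually_elim (simp add: blk_def divide_simps)
  ultimately show ?thesis by (simp add: tendsto_cong)
qed

lemma blk_param:
  assumes "n \<ge> 1" "blk n \<le> x" "x \<le> blk (Suc n)"
  shows "0 \<le> (x - blk n) * (real n * (real n + 1)) \<and> (x - blk n) * (real n * (real n + 1)) \<le> 1"
proof -
  have k: "real n * (real n + 1) \<ge> 0" by simp
  have "(x - blk n) * (real n * (real n + 1)) \<le> (blk (Suc n) - blk n) * (real n * (real n + 1))"
    using assms(3) k by (intro mult_right_mono) auto
  then show ?thesis using blk_diff[OF assms(1)] assms(2) k by simp
qed

lemma block_cont:
  assumes n: "n \<ge> 1" and p: "path (\<gamma> n)" and j: "\<gamma> n 1 = \<gamma> (Suc n) 0"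
  shows "continuous_on {blk n..blk (Suc n)} (inf_concat c \<gamma>)"
proof -
  define g where "g x = \<gamma> n ((x - blk n) * (real n * (real n + 1)))" for x
  have "continuous_on {blk n..blk (Suc n)} g"
    unfolding g_def
  proof (rule continuous_on_compose2[of "{0..1}" "\<gamma> n"])
    show "continuous_on {0..1} (\<gamma> n)" using p by (simp add: path_def)
    show "continuous_on {blk n..blk (Suc n)} (\<lambda>x. (x - blk n) * (real n * (real n + 1)))"
      by (intro continuous_intros)
    show "(\<lambda>x. (x - blk n) * (real n * (real n + 1))) ` {blk n..blk (Suc n)} \<subseteq> {0..1}"
      using blk_param[OF n] by auto
  qed
  moreover have "g x = inf_concat c \<gamma> x" if x: "x \<in> {blk n..blk (Suc n)}" for x
  proof (cases "x < blk (Suc n)")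
    case True then show ?thesis using x inf_concat_val[OF n, of x c \<gamma>] by (simp add: g_def)
  next
    case False
    then have xe: "x = blk (Suc n)" using x by simp
    have "inf_concat c \<gamma> x = \<gamma> (Suc n) 0"
      using inf_concat_val[of "Suc n" x c \<gamma>] xe blk_mono_Suc[of "Suc n"] by simp
    moreover have "g x = \<gamma> n 1" using xe blk_diff[OF n] by (simp add: g_def)
    ultimately show ?thesis using j by simp
  qed
  ultimately show ?thesis using continuous_on_eq by blast
qed

lemma prefix_cont:
  assumes p: "\<And>n. n \<ge> 1 \<Longrightarrow> path (\<gamma> n)" and j: "\<And>n. n \<ge> 1 \<Longrightarrow> \<gamma> n 1 = \<gamma> (Suc n) 0"
    and N: "N \<ge> 1"
  shows "continuous_on {0..blk (Suc N)} (inf_concat c \<gamma>)"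
  using N
proof (induction N rule: dec_induct)
  case base
  then show ?case using block_cont[of 1 \<gamma> c] p j by simp
next
  case (step N)
  have "{0..blk (Suc (Suc N))} = {0..blk (Suc N)} \<union> {blk (Suc N)..blk (Suc (Suc N))}"
    using blk_mono_Suc[of "Suc N"] blk_ge0[of "Suc N"] by auto
  moreover have "continuous_on {blk (Suc N)..blk (Suc (Suc N))} (inf_concat c \<gamma>)"
    using block_cont[of "Suc N" \<gamma> c] p j by simp
  ultimately show ?case using step(3) by (metis closed_atLeastAtMost continuous_on_closed_Un)
qed

lemma inf_concat_path:
  assumes p: "\<And>n. n \<ge> 1 \<Longrightarrow> path (\<gamma> n)" and j: "\<And>n. n \<ge> 1 \<Longrightarrow> \<gamma> n 1 = \<gamma> (Suc n) 0"
    and nul: "\<And>U. open U \<Longrightarrow> c \<in> U \<Longrightarrow> \<forall>\<^sub>F n in sequentially. path_image (\<gamma> n) \<subseteq> U"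
  shows "path (inf_concat c \<gamma>)"
  unfolding path_def continuous_on_eq_continuous_within
proof
  fix t :: real assume t: "t \<in> {0..1}"
  show "continuous (at t within {0..1}) (inf_concat c \<gamma>)"
  proof (cases "t < 1")
    case True
    then obtain N where N: "N \<ge> 1" "blk N \<le> t" "t < blk (Suc N)" using blk_cover t by auto
    have "continuous (at t within {0..blk (Suc N)}) (inf_concat c \<gamma>)"
      using prefix_cont[where \<gamma>=\<gamma> and c=c, OF p j N(1)] t N unfolding continuous_on_eq_continuous_within by auto
    moreover have "at t within {0..1} = at t within {0..blk (Suc N)}"
      by (rule at_within_nhd[where S="{..<blk (Suc N)}"]) (use N blk_lt1[of "Suc N"] in auto)
    ultimately show ?thesis by simp
  next
    case False
    then have t1: "t = 1" using t by simp
    have "((inf_concat c \<gamma>) \<longlongrightarrow> c) (at 1 within {0..1})"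
      unfolding tendsto_def
    proof (intro allI impI)
      fix S assume S: "open S" "c \<in> S"
      obtain N where N: "\<And>n. n \<ge> N \<Longrightarrow> path_image (\<gamma> n) \<subseteq> S"
        using nul[OF S] unfolding eventually_sequentially by auto
      define M where "M = max N 1"
      show "\<forall>\<^sub>F x in at 1 within {0..1}. inf_concat c \<gamma> x \<in> S"
        unfolding eventually_at_topological
      proof (intro exI conjI ballI impI)
        show "open {blk M<..}" by simp
        show "(1::real) \<in> {blk M<..}" using blk_lt1 by simp
        fix x assume x: "x \<in> {blk M<..}" "x \<noteq> 1" "x \<in> {0..1}"
        then obtain m where m: "m \<ge> 1" "blk m \<le> x" "x < blk (Suc m)" using blk_cover[of x] by auto
        have "m \<ge> M"
        proof (rule ccontr)
          assume "\<not> m \<ge> M"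
          then have "blk (Suc m) \<le> blk M" using blk_mono[of "Suc m" M] by simp
          then show False using m x by simp
        qed
        then have "path_image (\<gamma> m) \<subseteq> S" using N M_def by simp
        moreover have "inf_concat c \<gamma> x \<in> path_image (\<gamma> m)"
          using inf_concat_val[OF m, of c \<gamma>] blk_param[OF m(1,2)] m(3)
          unfolding path_image_def by auto
        ultimately show "inf_concat c \<gamma> x \<in> S" by auto
      qed
    qed
    moreover have "inf_concat c \<gamma> 1 = c" by (simp add: inf_concat_def)
    ultimately show ?thesis using t1 by (simp add: continuous_within)
  qed
qed


lemma prod_cont2:
  fixes opr :: "'a::topological_space \<Rightarrow> 'a \<Rightarrow> 'a" and A B :: "real \<Rightarrow> 'a"
    and f g :: "real \<times> real \<Rightarrow> real"
  assumes pd: "\<forall>\<alpha> \<beta>. path \<alpha> \<and> path \<beta> \<longrightarrow> path (\<lambda>t. opr (\<alpha> t) (\<beta> t))"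
    and pA: "path A" and pB: "path B"
    and cf: "continuous_on ({0..1} \<times> {0..1}) f" and cg: "continuous_on ({0..1} \<times> {0..1}) g"
    and fS: "f ` ({0..1} \<times> {0..1}) \<subseteq> {0..1}" and gS: "g ` ({0..1} \<times> {0..1}) \<subseteq> {0..1}"
  shows "continuous_on ({0..1} \<times> {0..1}) (\<lambda>z. opr (A (f z)) (B (g z)))"
  unfolding continuous_on_eq_continuous_within
proof
  define S :: "(real \<times> real) set" where "S = {0..1} \<times> {0..1}"
  have cvS: "convex S" unfolding S_def by (intro convex_Times convex_box) auto
  fix z :: "real \<times> real" assume zS: "z \<in> {0..1} \<times> {0..1}"
  show "continuous (at z within {0..1} \<times> {0..1}) (\<lambda>z. opr (A (f z)) (B (g z)))"
  proof (rule continuous_within_sequentiallyI)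
    fix u :: "nat \<Rightarrow> real \<times> real"
    assume u: "u \<longlonglongrightarrow> z" "\<forall>n. u n \<in> {0..1} \<times> {0..1}"
    define \<gamma> where "\<gamma> n = linepath (u (n - 1)) (u n)" for n
    define p where "p = inf_concat z \<gamma>"
    have pp: "path p" unfolding p_def
    proof (rule inf_concat_path)
      show "path (\<gamma> n)" for n by (simp add: \<gamma>_def)
      show "\<gamma> n 1 = \<gamma> (Suc n) 0" if "n \<ge> 1" for n by (simp add: \<gamma>_def linepath_def)
      fix U :: "(real \<times> real) set" assume U: "open U" "z \<in> U"
      then obtain \<epsilon> where \<epsilon>: "\<epsilon> > 0" "ball z \<epsilon> \<subseteq> U" by (meson open_contains_ball)
      have "\<forall>\<^sub>F n in sequentially. u n \<in> ball z \<epsilon>"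
        using u(1) \<epsilon>(1) by (rule tendstoD[THEN eventually_mono]) (simp add: dist_commute)
      then obtain N where N: "\<And>n. n \<ge> N \<Longrightarrow> u n \<in> ball z \<epsilon>" unfolding eventually_sequentially by auto
      show "\<forall>\<^sub>F n in sequentially. path_image (\<gamma> n) \<subseteq> U"
        unfolding eventually_sequentially
      proof (intro exI allI impI)
        fix n assume "Suc N \<le> n"
        then have "u (n - 1) \<in> ball z \<epsilon>" "u n \<in> ball z \<epsilon>" using N by auto
        then have "closed_segment (u (n - 1)) (u n) \<subseteq> ball z \<epsilon>"
          by (intro closed_segment_subset) auto
        then show "path_image (\<gamma> n) \<subseteq> U" using \<epsilon> by (simp add: \<gamma>_def)
      qed
    qed
    have pS: "p t \<in> S" if t: "t \<in> {0..1}" for t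
    proof (cases "t < 1")
      case True
      then obtain m where m: "m \<ge> 1" "blk m \<le> t" "t < blk (Suc m)" using blk_cover t by auto
      have "p t \<in> path_image (\<gamma> m)"
        using inf_concat_val[OF m, of z \<gamma>] blk_param[OF m(1,2)] m(3)
        unfolding path_image_def p_def by auto
      moreover have "path_image (\<gamma> m) \<subseteq> S"
        using u(2) cvS by (simp add: \<gamma>_def closed_segment_subset S_def)
      ultimately show ?thesis by auto
    next
      case False then have "t = 1" using t by simp
      then show ?thesis using zS by (simp add: p_def inf_concat_def S_def)
    qed
    have p1: "p 1 = z" by (simp add: p_def inf_concat_def)
    have pu: "p (blk (Suc n)) = u n" for n
      using inf_concat_val[of "Suc n" "blk (Suc n)" z \<gamma>] blk_mono_Suc[of "Suc n"]
      by (simp add: p_def \<gamma>_def linepath_def)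
    have cp: "continuous_on {0..1} p" using pp by (simp add: path_def)
    have pim: "p ` {0..1} \<subseteq> {0..1} \<times> {0..1}" using pS unfolding S_def by blast
    have path1: "path (A \<circ> (f \<circ> p))" unfolding path_def
      by (intro continuous_on_compose cp continuous_on_subset[OF cf pim]
          continuous_on_subset[OF pA[unfolded path_def]]) (use pim fS in \<open>auto simp: image_subset_iff\<close>)
    have path2: "path (B \<circ> (g \<circ> p))" unfolding path_def
      by (intro continuous_on_compose cp continuous_on_subset[OF cg pim]
          continuous_on_subset[OF pB[unfolded path_def]]) (use pim gS in \<open>auto simp: image_subset_iff\<close>)
    have "path (\<lambda>t. opr ((A \<circ> (f \<circ> p)) t) ((B \<circ> (g \<circ> p)) t))" using pd path1 path2 by blast
    then have "continuous (at 1 within {0..1}) (\<lambda>t. opr (A (f (p t))) (B (g (p t))))"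
      unfolding path_def continuous_on_eq_continuous_within by auto
    moreover have "(\<lambda>n. blk (Suc n)) \<longlonglongrightarrow> 1" using blk_tendsto by (rule LIMSEQ_Suc)
    moreover have "blk (Suc n) \<in> {0..1}" for n using blk_ge0[of "Suc n"] blk_lt1[of "Suc n"] by auto
    ultimately have "(\<lambda>n. opr (A (f (p (blk (Suc n))))) (B (g (p (blk (Suc n)))))) \<longlonglongrightarrow>
        opr (A (f (p 1))) (B (g (p 1)))"
      by (intro continuous_within_tendsto_compose'[where f="\<lambda>t. opr (A (f (p t))) (B (g (p t)))"]) auto
    then show "(\<lambda>n. opr (A (f (u n))) (B (g (u n)))) \<longlonglongrightarrow> opr (A (f z)) (B (g z))"
      by (simp add: pu p1)
  qed
qed


definition rp :: "(real \<Rightarrow> real) \<Rightarrow> real \<Rightarrow> real" where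
  "rp h = inf_concat 1 (\<lambda>n u. blk n + (blk (Suc n) - blk n) * h u)"

lemma blk_point:
  assumes "n \<ge> 1" "0 \<le> w" "w < 1"
  shows "inf_concat c \<gamma> (blk n + (blk (Suc n) - blk n) * w) = \<gamma> n w"
proof -
  have d: "(blk (Suc n) - blk n) * (real n * (real n + 1)) = 1" using blk_diff assms(1) by simp
  have dp: "blk (Suc n) - blk n > 0" using blk_mono_Suc assms(1) by simp
  have "(blk (Suc n) - blk n) * w < (blk (Suc n) - blk n) * 1" using dp assms by (intro mult_strict_left_mono) auto
  then have lt: "blk n + (blk (Suc n) - blk n) * w < blk (Suc n)" by simp
  have le: "blk n \<le> blk n + (blk (Suc n) - blk n) * w" using dp assms by simp
  have "inf_concat c \<gamma> (blk n + (blk (Suc n) - blk n) * w) =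
     \<gamma> n ((blk (Suc n) - blk n) * w * (real n * (real n + 1)))"
    by (subst inf_concat_val[OF assms(1) le lt]) simp
  also have "(blk (Suc n) - blk n) * w * (real n * (real n + 1)) = w"
    using d by (metis mult.commute mult.left_commute mult_1_right)
  finally show ?thesis .
qed

lemma blk_point1:
  assumes "n \<ge> 1"
  shows "inf_concat c \<gamma> (blk n + (blk (Suc n) - blk n) * 1) = \<gamma> (Suc n) 0"
  using blk_point[of "Suc n" 0 c \<gamma>] by simp

lemma rp_val:
  assumes "n \<ge> 1" "blk n \<le> t" "t < blk (Suc n)"
  shows "rp h t = blk n + (blk (Suc n) - blk n) * h ((t - blk n) * (real n * (real n + 1)))"
  unfolding rp_def by (subst inf_concat_val[OF assms]) simp

lemma rp_props:
  assumes hc: "continuous_on {0..1} h" and hr: "\<And>u. u \<in> {0..1} \<Longrightarrow> h u \<in> {0..1}"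
    and h0: "h 0 = 0" and h1: "h 1 = 1"
  shows "continuous_on {0..1} (rp h)" "\<And>t. t \<in> {0..1} \<Longrightarrow> rp h t \<in> {0..1}"
    "rp h 0 = 0" "rp h 1 = 1"
proof -
  define \<phi> where "\<phi> n u = blk n + (blk (Suc n) - blk n) * h u" for n u
  have range: "\<phi> n u \<in> {blk n..blk (Suc n)}" if "n \<ge> 1" "u \<in> {0..1}" for n u
  proof -
    have "0 \<le> h u" "h u \<le> 1" using hr that(2) by auto
    moreover have "blk (Suc n) - blk n > 0" using blk_mono_Suc that(1) by simp
    ultimately have "0 \<le> (blk (Suc n) - blk n) * h u" "(blk (Suc n) - blk n) * h u \<le> (blk (Suc n) - blk n) * 1"
      by (auto intro: mult_left_mono)
    then show ?thesis by (simp add: \<phi>_def)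
  qed
  have "path (inf_concat 1 \<phi>)"
  proof (rule inf_concat_path)
    show "path (\<phi> n)" for n unfolding path_def \<phi>_def by (intro continuous_intros hc)
    show "\<phi> n 1 = \<phi> (Suc n) 0" for n by (simp add: \<phi>_def h0 h1)
    fix U :: "real set" assume U: "open U" "1 \<in> U"
    then obtain \<epsilon> where \<epsilon>: "\<epsilon> > 0" "ball 1 \<epsilon> \<subseteq> U" by (meson open_contains_ball)
    have "\<forall>\<^sub>F n in sequentially. dist (blk n) 1 < \<epsilon>" using blk_tendsto \<epsilon>(1) by (rule tendstoD)
    moreover have "\<forall>\<^sub>F n in sequentially. n \<ge> 1" by (rule eventually_ge_at_top)
    ultimately show "\<forall>\<^sub>F n in sequentially. path_image (\<phi> n) \<subseteq> U"
    proof eventually_elim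
      case (elim n)
      have "path_image (\<phi> n) \<subseteq> {blk n..blk (Suc n)}" using range elim(2) by (auto simp: path_image_def)
      also have "\<dots> \<subseteq> ball 1 \<epsilon>" using elim(1) blk_lt1[of "Suc n"] by (auto simp: dist_real_def)
      finally show ?case using \<epsilon> by auto
    qed
  qed
  moreover have "(\<lambda>n u. blk n + (blk (Suc n) - blk n) * h u) = \<phi>" by (simp add: \<phi>_def fun_eq_iff)
  ultimately show "continuous_on {0..1} (rp h)" by (simp add: rp_def path_def)
  show "rp h t \<in> {0..1}" if t: "t \<in> {0..1}" for t
  proof (cases "t < 1")
    case True
    then obtain m where m: "m \<ge> 1" "blk m \<le> t" "t < blk (Suc m)" using blk_cover t by auto
    have "rp h t = \<phi> m ((t - blk m) * (real m * (real m + 1)))"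
      using rp_val[OF m] by (simp add: \<phi>_def)
    moreover have "(t - blk m) * (real m * (real m + 1)) \<in> {0..1}" using blk_param[OF m(1,2)] m(3) by simp
    ultimately have "rp h t \<in> {blk m..blk (Suc m)}" using range m(1) by simp
    then show ?thesis using blk_ge0[OF m(1)] blk_lt1[of "Suc m"] by auto
  next
    case False then show ?thesis using t by (simp add: rp_def inf_concat_def)
  qed
  show "rp h 0 = 0" using rp_val[of 1 0 h] blk_mono_Suc[of 1] h0 by simp
  show "rp h 1 = 1" by (simp add: rp_def inf_concat_def)
qed


lemma cvx01: "(s::real) \<in> {0..1} \<Longrightarrow> a \<in> {0..1} \<Longrightarrow> b \<in> {0..1} \<Longrightarrow> (1 - s) * a + s * b \<in> {0..1}"
  by (auto intro!: convex_bound_le add_nonneg_nonneg mult_nonneg_nonneg)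

theorem mainTheorem9:
  fixes opr :: "'a::topological_space \<Rightarrow> 'a \<Rightarrow> 'a" and e :: 'a
    and \<alpha> \<beta> :: "nat \<Rightarrow> real \<Rightarrow> 'a"
  assumes "pre_delta_monoid opr e"
    and "path_connected (UNIV :: 'a set)"
    and "null_sequence e \<alpha>"
    and "null_sequence e \<beta>"
  shows "homotopic_paths
           (set_mult opr (path_image (inf_concat e \<alpha>)) (path_image (inf_concat e \<beta>)))
           (inf_concat e (\<lambda>n. \<alpha> n +++ \<beta> n))
           (inf_concat e \<alpha> +++ inf_concat e \<beta>)"
proof -
  have pd: "\<forall>\<alpha> \<beta>. path \<alpha> \<and> path \<beta> \<longrightarrow> path (\<lambda>t. opr (\<alpha> t) (\<beta> t))"
    and el: "\<And>x. opr e x = x" and er: "\<And>x. opr x e = x"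
    using assms(1) unfolding pre_delta_monoid_def by auto
  have la: "\<And>n. n \<ge> 1 \<Longrightarrow> path (\<alpha> n) \<and> \<alpha> n 0 = e \<and> \<alpha> n 1 = e"
    and na: "\<And>U. open U \<Longrightarrow> e \<in> U \<Longrightarrow> \<forall>\<^sub>F n in sequentially. path_image (\<alpha> n) \<subseteq> U"
    using assms(3) unfolding null_sequence_def loop_at_def pathstart_def pathfinish_def by auto
  have lb: "\<And>n. n \<ge> 1 \<Longrightarrow> path (\<beta> n) \<and> \<beta> n 0 = e \<and> \<beta> n 1 = e"
    and nb: "\<And>U. open U \<Longrightarrow> e \<in> U \<Longrightarrow> \<forall>\<^sub>F n in sequentially. path_image (\<beta> n) \<subseteq> U"
    using assms(4) unfolding null_sequence_def loop_at_def pathstart_def pathfinish_def by auto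
  define A where "A = inf_concat e \<alpha>"
  define B where "B = inf_concat e \<beta>"
  have pA: "path A" unfolding A_def by (rule inf_concat_path) (use la na in auto)
  have pB: "path B" unfolding B_def by (rule inf_concat_path) (use lb nb in auto)
  have A0: "A 0 = e" using inf_concat_val[of 1 0 e \<alpha>] blk_mono_Suc[of 1] la[of 1] by (simp add: A_def)
  have B0: "B 0 = e" using inf_concat_val[of 1 0 e \<beta>] blk_mono_Suc[of 1] lb[of 1] by (simp add: B_def)
  have A1: "A 1 = e" and B1: "B 1 = e" by (simp_all add: A_def B_def inf_concat_def)
  define hf :: "real \<Rightarrow> real" where "hf u = min (2 * u) 1" for u
  define hg :: "real \<Rightarrow> real" where "hg u = max (2 * u - 1) 0" for u
  have hfc: "continuous_on {0..1} hf" unfolding hf_def by (intro continuous_intros)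
  have hgc: "continuous_on {0..1} hg" unfolding hg_def by (intro continuous_intros)
  have hfr: "\<And>u. u \<in> {0..1} \<Longrightarrow> hf u \<in> {0..1}" and hgr: "\<And>u. u \<in> {0..1} \<Longrightarrow> hg u \<in> {0..1}"
    by (auto simp: hf_def hg_def)
  have hf01: "hf 0 = 0" "hf 1 = 1" and hg01: "hg 0 = 0" "hg 1 = 1" by (simp_all add: hf_def hg_def)
  note rf = rp_props[OF hfc hfr hf01] and rg = rp_props[OF hgc hgr hg01]
  have rf0: "rp hf 0 = 0" "rp hf 1 = 1" using rf(3,4) by simp_all
  have rg0: "rp hg 0 = 0" "rp hg 1 = 1" using rg(3,4) by simp_all
  have start: "inf_concat e (\<lambda>n. \<alpha> n +++ \<beta> n) t = opr (A (rp hf t)) (B (rp hg t))"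
    if t: "t \<in> {0..1}" for t
  proof (cases "t < 1")
    case False
    then have "t = 1" using t by simp
    then show ?thesis using rf0 rg0 A1 B1 el by (simp add: inf_concat_def)
  next
    case True
    then obtain n where n: "n \<ge> 1" "blk n \<le> t" "t < blk (Suc n)" using blk_cover t by auto
    define v where "v = (t - blk n) * (real n * (real n + 1))"
    have v: "0 \<le> v" "v < 1"
    proof -
      have "v \<le> 1" using blk_param[OF n(1,2)] n(3) by (simp add: v_def)
      moreover have "v \<noteq> 1"
      proof
        assume "v = 1"
        then have "(t - blk n) * (real n * (real n + 1)) = (blk (Suc n) - blk n) * (real n * (real n + 1))"
          using blk_diff[OF n(1)] by (simp add: v_def)
        then have "t = blk (Suc n)" using n(1) by simp
        then show False using n(3) by simp
      qed
      ultimately show "v < 1" by simp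
      show "0 \<le> v" using blk_param[OF n(1,2)] n(3) by (simp add: v_def)
    qed
    have L: "inf_concat e (\<lambda>n. \<alpha> n +++ \<beta> n) t = (\<alpha> n +++ \<beta> n) v"
      unfolding v_def by (subst inf_concat_val[OF n]) simp
    have F: "rp hf t = blk n + (blk (Suc n) - blk n) * hf v" using rp_val[OF n] by (simp add: v_def)
    have G: "rp hg t = blk n + (blk (Suc n) - blk n) * hg v" using rp_val[OF n] by (simp add: v_def)
    have Be: "B (blk n + (blk (Suc n) - blk n) * 0) = e" using blk_point[OF n(1), of 0 e \<beta>] lb[OF n(1)]
      by (simp add: B_def)
    have Ae: "A (blk n + (blk (Suc n) - blk n) * 1) = e" using blk_point1[OF n(1), of e \<alpha>] la[of "Suc n"]
      by (simp add: A_def)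
    consider "2 * v < 1" | "2 * v = 1" | "2 * v > 1" by linarith
    then show ?thesis
    proof cases
      case 1
      then have "hf v = 2 * v" "hg v = 0" by (auto simp: hf_def hg_def)
      moreover have "A (blk n + (blk (Suc n) - blk n) * (2 * v)) = \<alpha> n (2 * v)"
        using blk_point[OF n(1), of "2 * v" e \<alpha>] v 1 by (simp add: A_def)
      ultimately show ?thesis using L F G Be er 1 by (simp add: joinpaths_def)
    next
      case 2
      then have "hf v = 1" "hg v = 0" by (auto simp: hf_def hg_def)
      moreover have "\<alpha> n (2 * v) = e" using 2 la[OF n(1)] by simp
      ultimately show ?thesis using L F G Be Ae er 2 by (simp add: joinpaths_def)
    next
      case 3
      then have "hf v = 1" "hg v = 2 * v - 1" by (auto simp: hf_def hg_def)
      moreover have "B (blk n + (blk (Suc n) - blk n) * (2 * v - 1)) = \<beta> n (2 * v - 1)"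
        using blk_point[OF n(1), of "2 * v - 1" e \<beta>] v 3 by (simp add: B_def)
      ultimately show ?thesis using L F G Ae el 3 by (simp add: joinpaths_def)
    qed
  qed
  have finish: "(A +++ B) t = opr (A (hf t)) (B (hg t))" for t
    using A0 A1 B0 B1 el er by (auto simp: joinpaths_def hf_def hg_def)
  define F where "F z = (1 - fst z) * rp hf (snd z) + fst z * hf (snd z)" for z :: "real \<times> real"
  define G where "G z = (1 - fst z) * rp hg (snd z) + fst z * hg (snd z)" for z :: "real \<times> real"
  have cF: "continuous_on ({0..1} \<times> {0..1}) F" unfolding F_def
    by (intro continuous_intros continuous_on_compose2[OF rf(1) continuous_on_snd]
        continuous_on_compose2[OF hfc continuous_on_snd]) auto
  have cG: "continuous_on ({0..1} \<times> {0..1}) G" unfolding G_def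
    by (intro continuous_intros continuous_on_compose2[OF rg(1) continuous_on_snd]
        continuous_on_compose2[OF hgc continuous_on_snd]) auto
  have FS: "F z \<in> {0..1}" if "z \<in> {0..1} \<times> {0..1}" for z
    unfolding F_def using that by (intro cvx01 rf(2) hfr) auto
  have GS: "G z \<in> {0..1}" if "z \<in> {0..1} \<times> {0..1}" for z
    unfolding G_def using that by (intro cvx01 rg(2) hgr) auto
  define H where "H z = opr (A (F z)) (B (G z))" for z
  show ?thesis
    unfolding homotopic_paths A_def[symmetric] B_def[symmetric]
  proof (intro exI conjI ballI)
    show "continuous_on ({0..1} \<times> {0..1}) H" unfolding H_def
      by (rule prod_cont2[OF pd pA pB cF cG]) (use FS GS in auto)
    show "H \<in> {0..1} \<times> {0..1} \<rightarrow> set_mult opr (path_image A) (path_image B)"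
      using FS GS by (force simp: H_def set_mult_def path_image_def)
    fix x :: real assume x: "x \<in> {0..1}"
    show "H (0, x) = inf_concat e (\<lambda>n. \<alpha> n +++ \<beta> n) x" using start[OF x] by (simp add: H_def F_def G_def)
    show "H (1, x) = (A +++ B) x" using finish[of x] by (simp add: H_def F_def G_def)
    have ps: "pathstart (inf_concat e (\<lambda>n. \<alpha> n +++ \<beta> n)) = e" "pathfinish (inf_concat e (\<lambda>n. \<alpha> n +++ \<beta> n)) = e"
      using start[of 0] start[of 1] rf0 rg0 A0 B0 A1 B1 el by (auto simp: pathstart_def pathfinish_def)
    show "pathstart (H \<circ> Pair x) = pathstart (inf_concat e (\<lambda>n. \<alpha> n +++ \<beta> n))"
      using ps rf0 rg0 A0 B0 el by (simp add: pathstart_def H_def F_def G_def hf_def hg_def)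
    show "pathfinish (H \<circ> Pair x) = pathfinish (inf_concat e (\<lambda>n. \<alpha> n +++ \<beta> n))"
      using ps rf0 rg0 A1 B1 el by (simp add: pathfinish_def H_def F_def G_def hf_def hg_def)
  qed
qed

end
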